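(* Let $\Delta \subset \mathbb{R}^2$ be a compact connected domain with connected piecewise-linear boundary, let $\chi$ be a finite set of nodes in $\Delta$ containing the fence nodes $\chi_f$, and let $\chi_{int} = \chi \setminus \chi_f$. Let $\mathcal{R}$ be the Rips complex of $\chi$ with parameter $r_b>0$ and $\mathcal{F} \subseteq \mathcal{R}$ the fence subcomplex. Let $X_v$, $v \in \chi_{int}$, be independent random variables giving the failure time of node $v$, and assume that $(\mathcal{R},\mathcal{F})$ passes the de Silva–Ghrist criterion (i.e., $\emptyset$ is not a death set). Let $A_1, \dots, A_k$ be all the minimal death sets, and for $A \subseteq \chi_{int}$ put $S_A = \max_{v \in A} X_v$. Then for every $t$, $$\mathbb{P}(\text{failure by time } t) = \mathbb{P}\left( \min_{1 \le i \le k} S_{A_i} \le t \right),$$ where "failure by time $t$" is the event that the set $\{v \in \chi_{int} : X_v \le t\}$ of nodes failed by time $t$ is a death set.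
   Context: Setting: the fence nodes $\chi_f$ are the vertices of the piecewise-linear boundary $\partial\Delta$, cyclically ordered, with cyclically consecutive fence nodes at distance less than $r_b$. The Rips complex $\mathcal{R}$ has a simplex for every nonempty subset of $\chi$ whose points are pairwise at distance $< r_b$. The fence $\mathcal{F}$ is the subcomplex consisting of the fence nodes and the edges joining cyclically consecutive fence nodes (a cycle homeomorphic to $S^1$). For $B \subseteq \chi_{int}$, $\mathcal{R}_B$ denotes the maximal subcomplex of $\mathcal{R}$ with vertex set $\chi \setminus B$ (the simplices containing no vertex of $B$). Homology is with $\mathbb{Z}_2$ coefficients. A class in $H_2(\mathcal{R}_B,\mathcal{F})$ is fundamental if its image under the connecting homomorphism $H_2(\mathcal{R}_B,\mathcal{F}) \to H_1(\mathcal{F})$ is nonzero; $(\mathcal{R}_B,\mathcal{F})$ passes the de Silva–Ghrist criterion if such a class exists. A set $B \subseteq \chi_{int}$ is a death set if $(\mathcal{R}_B,\mathcal{F})$ does not pass the criterion, and a minimal death set if moreover no proper subset of $B$ is a death set. *)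

theory Defs
  imports "HOL-Probability.Probability"
begin

type_synonym pt = "real^2"

text \<open>Abstract simplicial complexes are represented as sets of simplices; a simplex
is a nonempty finite set of vertices. Chains with Z_2 coefficients are finite sets
of simplices (a simplex belongs to the chain iff its coefficient is 1).\<close>

definition rips :: "pt set \<Rightarrow> real \<Rightarrow> pt set set" where
  "rips Nodes r = {\<sigma>. \<sigma> \<noteq> {} \<and> finite \<sigma> \<and> \<sigma> \<subseteq> Nodes \<and> (\<forall>x\<in>\<sigma>. \<forall>y\<in>\<sigma>. dist x y < r)}"

definition fence :: "(nat \<Rightarrow> pt) \<Rightarrow> nat \<Rightarrow> pt set set" where
  "fence f n = {{f i} | i. i < n} \<union> {{f i, f (Suc i mod n)} | i. i < n}"

definition restrict_cplx :: "'v set set \<Rightarrow> 'v set \<Rightarrow> 'v set set" where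
  "restrict_cplx K B = {\<sigma>\<in>K. \<sigma> \<inter> B = {}}"

definition chain :: "'v set set \<Rightarrow> nat \<Rightarrow> 'v set set \<Rightarrow> bool" where
  "chain K k c \<longleftrightarrow> finite c \<and> c \<subseteq> K \<and> (\<forall>\<sigma>\<in>c. card \<sigma> = Suc k)"

definition bd :: "'v set set \<Rightarrow> 'v set set" where
  "bd c = {\<tau>. \<tau> \<noteq> {} \<and> odd (card {\<sigma>\<in>c. \<tau> \<subseteq> \<sigma> \<and> card \<sigma> = Suc (card \<tau>)})}"

text \<open>Existence of a fundamental class: a class in H_2(K,L) (represented by a relative
2-cycle c, i.e. a 2-chain of K whose boundary is a 1-chain of L) whose image under the
connecting homomorphism H_2(K,L) \<rightarrow> H_1(L), namely the class of bd c in
H_1(L) = Z_1(L)/B_1(L), is nonzero, i.e. bd c is not a boundary in L.\<close>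
definition passes_dSG :: "'v set set \<Rightarrow> 'v set set \<Rightarrow> bool" where
  "passes_dSG K L \<longleftrightarrow>
     (\<exists>c. chain K 2 c \<and> chain L 1 (bd c) \<and> \<not> (\<exists>d. chain L 2 d \<and> bd d = bd c))"

definition death_set :: "'v set set \<Rightarrow> 'v set set \<Rightarrow> 'v set \<Rightarrow> 'v set \<Rightarrow> bool" where
  "death_set R F Xint B \<longleftrightarrow> B \<subseteq> Xint \<and> \<not> passes_dSG (restrict_cplx R B) F"

definition minimal_death_set :: "'v set set \<Rightarrow> 'v set set \<Rightarrow> 'v set \<Rightarrow> 'v set \<Rightarrow> bool" where
  "minimal_death_set R F Xint B \<longleftrightarrow>
     death_set R F Xint B \<and> (\<forall>B'. B' \<subset> B \<longrightarrow> \<not> death_set R F Xint B')"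

end

theory Submission
  imports Defs
begin


lemma passes_mono:
  assumes "passes_dSG K' L" "K' \<subseteq> K" shows "passes_dSG K L"
proof -
  obtain c where c: "chain K' 2 c" "chain L 1 (bd c)" "\<not> (\<exists>d. chain L 2 d \<and> bd d = bd c)"
    using assms(1) unfolding passes_dSG_def by blast
  have "chain K 2 c" using c(1) assms(2) unfolding chain_def by (meson order_trans)
  thus ?thesis using c unfolding passes_dSG_def by blast
qed

lemma death_mono:
  assumes "death_set R F Xi B" "B \<subseteq> B'" "B' \<subseteq> Xi" shows "death_set R F Xi B'"
proof -
  have "restrict_cplx R B' \<subseteq> restrict_cplx R B" using assms(2) unfolding restrict_cplx_def by blast
  thus ?thesis using assms passes_mono unfolding death_set_def by blast
qed

lemma exists_minimal:
  assumes "death_set R F Xi B" "finite B"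
  shows "\<exists>B0. minimal_death_set R F Xi B0 \<and> B0 \<subseteq> B"
proof -
  define P where "P m \<longleftrightarrow> (\<exists>B'. death_set R F Xi B' \<and> B' \<subseteq> B \<and> card B' = m)" for m
  have "P (card B)" using assms unfolding P_def by blast
  define m where "m = (LEAST m. P m)"
  have Pm: "P m" using LeastI[of P "card B"] \<open>P (card B)\<close> m_def by simp
  have le: "m \<le> m'" if "P m'" for m' using Least_le[of P m'] that m_def by simp
  from Pm obtain B0 where B0: "death_set R F Xi B0" "B0 \<subseteq> B" "card B0 = m" unfolding P_def by blast
  have fin: "finite B0" using B0(2) assms(2) finite_subset by blast
  have "\<not> death_set R F Xi B'" if "B' \<subset> B0" for B'
  proof
    assume d: "death_set R F Xi B'"
    have "card B' < card B0" using that fin psubset_card_mono by blast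
    moreover have "P (card B')" using d that B0(2) unfolding P_def by blast
    ultimately show False using le B0(3) by fastforce
  qed
  thus ?thesis using B0 unfolding minimal_death_set_def by blast
qed

theorem mainTheorem2:
  fixes D :: "pt set" and Nodes :: "pt set" and f :: "nat \<Rightarrow> pt" and n :: nat
    and r\<^sub>b :: real and M :: "'a measure" and X :: "pt \<Rightarrow> 'a \<Rightarrow> real"
    and A :: "nat \<Rightarrow> pt set" and k :: nat and t :: real
  assumes "compact D" and "connected D"
    and "3 \<le> n" and "inj_on f {..<n}"
    and "frontier D = (\<Union>i<n. closed_segment (f i) (f (Suc i mod n)))"
    and "frontier D homeomorphic sphere (0::pt) 1"
    and "\<forall>i<n. dist (f i) (f (Suc i mod n)) < r\<^sub>b"
    and "r\<^sub>b > 0"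
    and "finite Nodes" and "Nodes \<subseteq> D" and "f ` {..<n} \<subseteq> Nodes"
    and "prob_space M"
    and "\<forall>v\<in>Nodes - f ` {..<n}. X v \<in> borel_measurable M"
    and "prob_space.indep_vars M (\<lambda>_. borel) X (Nodes - f ` {..<n})"
    and "passes_dSG (rips Nodes r\<^sub>b) (fence f n)"
    and "A ` {..<k} = {B. minimal_death_set (rips Nodes r\<^sub>b) (fence f n) (Nodes - f ` {..<n}) B}"
  shows "measure M {\<omega>\<in>space M. death_set (rips Nodes r\<^sub>b) (fence f n) (Nodes - f ` {..<n})
                                  {v\<in>Nodes - f ` {..<n}. X v \<omega> \<le> t}}
       = measure M {\<omega>\<in>space M. (INF i\<in>{..<k}. SUP v\<in>A i. ereal (X v \<omega>)) \<le> ereal t}"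
proof -
  let ?R = "rips Nodes r\<^sub>b" and ?F = "fence f n" and ?Xi = "Nodes - f ` {..<n}"
  have empty_not: "\<not> death_set ?R ?F ?Xi {}"
    using assms(15) unfolding death_set_def restrict_cplx_def by simp
  have Ai: "minimal_death_set ?R ?F ?Xi (A i)" if "i < k" for i
    using assms(16) that by blast
  have Aisub: "A i \<subseteq> ?Xi" "A i \<noteq> {}" "finite (A i)" if "i < k" for i
  proof -
    show s: "A i \<subseteq> ?Xi" using Ai[OF that] unfolding minimal_death_set_def death_set_def by blast
    show "A i \<noteq> {}"
    proof
      assume "A i = {}"
      then have "death_set ?R ?F ?Xi {}" using Ai[OF that] unfolding minimal_death_set_def by simp
      then show False using empty_not by simp
    qed
    show "finite (A i)" using s assms(9) finite_subset by blast
  qed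
  have key: "death_set ?R ?F ?Xi {v\<in>?Xi. X v \<omega> \<le> t}
      \<longleftrightarrow> (INF i\<in>{..<k}. SUP v\<in>A i. ereal (X v \<omega>)) \<le> ereal t" for \<omega>
  proof -
    let ?S = "{v\<in>?Xi. X v \<omega> \<le> t}"
    have sup: "(SUP v\<in>A i. ereal (X v \<omega>)) \<le> ereal t \<longleftrightarrow> A i \<subseteq> ?S" if "i < k" for i
      using Aisub[OF that] by (auto simp: SUP_le_iff)
    have "death_set ?R ?F ?Xi ?S \<longleftrightarrow> (\<exists>i<k. A i \<subseteq> ?S)"
    proof
      assume "death_set ?R ?F ?Xi ?S"
      moreover have "finite ?S" using assms(9) by simp
      ultimately obtain B0 where "minimal_death_set ?R ?F ?Xi B0" "B0 \<subseteq> ?S"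
        using exists_minimal by blast
      moreover from this(1) have "B0 \<in> A ` {..<k}" using assms(16) by simp
      ultimately show "\<exists>i<k. A i \<subseteq> ?S" by auto
    next
      assume "\<exists>i<k. A i \<subseteq> ?S"
      then obtain i where "i < k" "A i \<subseteq> ?S" by blast
      then show "death_set ?R ?F ?Xi ?S"
        using death_mono[of ?R ?F ?Xi "A i" ?S] Ai[of i] unfolding minimal_death_set_def by blast
    qed
    also have "\<dots> \<longleftrightarrow> (\<exists>i<k. (SUP v\<in>A i. ereal (X v \<omega>)) \<le> ereal t)"
      using sup by blast
    also have "\<dots> \<longleftrightarrow> (INF i\<in>{..<k}. SUP v\<in>A i. ereal (X v \<omega>)) \<le> ereal t"
    proof
      assume "\<exists>i<k. (SUP v\<in>A i. ereal (X v \<omega>)) \<le> ereal t"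
      then show "(INF i\<in>{..<k}. SUP v\<in>A i. ereal (X v \<omega>)) \<le> ereal t"
        by (meson INF_lower2 lessThan_iff)
    next
      assume h: "(INF i\<in>{..<k}. SUP v\<in>A i. ereal (X v \<omega>)) \<le> ereal t"
      have "k \<noteq> 0" using h by (cases "k = 0") (auto simp: top_ereal_def)
      then have "(INF i\<in>{..<k}. SUP v\<in>A i. ereal (X v \<omega>)) \<in> (\<lambda>i. SUP v\<in>A i. ereal (X v \<omega>)) ` {..<k}"
        by (subst cInf_eq_Min) (auto intro!: Min_in)
      then show "\<exists>i<k. (SUP v\<in>A i. ereal (X v \<omega>)) \<le> ereal t" using h by auto
    qed
    finally show ?thesis .
  qed
  show ?thesis using key by simp
qed

end
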